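(* Let $\alpha\in\mathbb{R}$, $\gamma,\sigma>0$. Let $p_Y$ be the density on $[0,\infty)$ \[ p_Y(y)=\frac{1}{\Phi\!\left(\frac{\alpha}{\sqrt{\sigma^2\gamma/2}}\right)\sqrt{\pi\sigma^2/\gamma}}\exp\!\left(-\frac{\gamma}{\sigma^2}\Big(y-\frac{\alpha}{\gamma}\Big)^2\right),\quad y\ge 0, \] ($\Phi$ the standard normal distribution function), let $F_Y$ be its distribution function and $\bar F_Y=1-F_Y$. Let $q_L:=\frac{\sigma^2}{2}p_Y(0)$, $W(v):=\exp\left(\frac{2\alpha v}{\sigma^2}-\frac{\gamma v^2}{\sigma^2}\right)$, and let \[ h(x)=\int_{0}^{x}\frac{1}{W(u)}\left(1-\frac{2q_L}{\sigma^{2}}\int_0^u W(v)\,\mathrm{d}v\right)\mathrm{d}u, \] i.e. the unique solution of $(\alpha-\gamma x)h'(x)+\frac{\sigma^2}{2}h''(x)=-q_L$ for $x\ge0$ with $h(0)=0$, $h'(0)=1$. Then for $x>0$, $h'(x)=\frac{p_Y(0)}{p_Y(x)}\bar F_Y(x)$. Moreover, $\int_0^\infty h'(x)^2p_Y(x)\,\mathrm{d}x<\infty$.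
   Context: $p_Y$ is the invariant (truncated normal) density of the Ornstein–Uhlenbeck process $\mathrm{d}Y_t=(\alpha-\gamma Y_t)\mathrm{d}t+\sigma\mathrm{d}W_t$ reflected at $0$ from below. *)

theory Defs
  imports "HOL-Probability.Probability"
begin

definition Phi :: "real \<Rightarrow> real" where
  "Phi x = (LBINT t:{..x}. std_normal_density t)"

definition pY :: "real \<Rightarrow> real \<Rightarrow> real \<Rightarrow> real \<Rightarrow> real" where
  "pY \<alpha> \<gamma> \<sigma> y =
     1 / (Phi (\<alpha> / sqrt (\<sigma>\<^sup>2 * \<gamma> / 2)) * sqrt (pi * \<sigma>\<^sup>2 / \<gamma>))
     * exp (- (\<gamma> / \<sigma>\<^sup>2) * (y - \<alpha> / \<gamma>)\<^sup>2)"

definition FY :: "real \<Rightarrow> real \<Rightarrow> real \<Rightarrow> real \<Rightarrow> real" where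
  "FY \<alpha> \<gamma> \<sigma> x = (LBINT y:{0..x}. pY \<alpha> \<gamma> \<sigma> y)"

definition FbarY :: "real \<Rightarrow> real \<Rightarrow> real \<Rightarrow> real \<Rightarrow> real" where
  "FbarY \<alpha> \<gamma> \<sigma> x = 1 - FY \<alpha> \<gamma> \<sigma> x"

definition qL :: "real \<Rightarrow> real \<Rightarrow> real \<Rightarrow> real" where
  "qL \<alpha> \<gamma> \<sigma> = \<sigma>\<^sup>2 / 2 * pY \<alpha> \<gamma> \<sigma> 0"

definition Wf :: "real \<Rightarrow> real \<Rightarrow> real \<Rightarrow> real \<Rightarrow> real" where
  "Wf \<alpha> \<gamma> \<sigma> v = exp (2 * \<alpha> * v / \<sigma>\<^sup>2 - \<gamma> * v\<^sup>2 / \<sigma>\<^sup>2)"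

definition hf :: "real \<Rightarrow> real \<Rightarrow> real \<Rightarrow> real \<Rightarrow> real" where
  "hf \<alpha> \<gamma> \<sigma> x =
     (LBINT u=0..x. (1 / Wf \<alpha> \<gamma> \<sigma> u) *
        (1 - 2 * qL \<alpha> \<gamma> \<sigma> / \<sigma>\<^sup>2 * (LBINT v=0..u. Wf \<alpha> \<gamma> \<sigma> v)))"

end

theory Submission
  imports Defs
begin


lemma Wf_pos: "Wf a g s v > 0" by (simp add: Wf_def)

lemma pY_eq:
  assumes "g > 0" "s > 0"
  shows "pY a g s y = pY a g s 0 * Wf a g s y"
proof -
  have "-(g/s\<^sup>2)*(y-a/g)\<^sup>2 = -(g/s\<^sup>2)*(0-a/g)\<^sup>2 + (2*a*y/s\<^sup>2 - g*y\<^sup>2/s\<^sup>2)"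
    using assms by (simp add: field_simps power2_eq_square)
  then show ?thesis unfolding pY_def Wf_def by (simp add: exp_add[symmetric])
qed

lemma pY_normal:
  assumes "g > 0" "s > 0"
  shows "pY a g s y = normal_density (a/g) (sqrt (s\<^sup>2/(2*g))) y / Phi (a / sqrt (s\<^sup>2 * g / 2))"
proof -
  have e: "-(y - a/g)\<^sup>2 / (2 * (sqrt (s\<^sup>2/(2*g)))\<^sup>2) = -(g/s\<^sup>2)*(y-a/g)\<^sup>2"
    using assms by (simp add: field_simps)
  have r: "2 * pi * (sqrt (s\<^sup>2/(2*g)))\<^sup>2 = pi * s\<^sup>2 / g"
    using assms by (simp add: field_simps)
  show ?thesis unfolding pY_def normal_density_def e r by simp
qed

lemma Phi_shift:
  assumes "g > 0" "s > 0"
  shows "(LINT y:{0..}|lborel. normal_density (a/g) (sqrt (s\<^sup>2/(2*g))) y) = Phi (a / sqrt (s\<^sup>2 * g / 2))"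
proof -
  define m where "m = a/g"
  define t where "t = sqrt (s\<^sup>2/(2*g))"
  have t: "t > 0" using assms by (simp add: t_def)
  have mt: "m / t = a / sqrt (s\<^sup>2 * g / 2)"
  proof -
    have "sqrt (s\<^sup>2 * g / 2) = sqrt (g\<^sup>2 * (s\<^sup>2/(2*g)))"
      by (rule arg_cong[where f=sqrt]) (use assms in \<open>simp add: field_simps power2_eq_square\<close>)
    also have "\<dots> = g * t" unfolding t_def real_sqrt_mult using assms by simp
    finally have "sqrt (s\<^sup>2 * g / 2) = g * t" .
    then show ?thesis unfolding m_def using assms t by (simp add: field_simps)
  qed
  have "(LINT y:{0..}|lborel. normal_density m t y) = (\<integral>y. indicator {0..} y * normal_density m t y \<partial>lborel)"
    by (simp add: set_lebesgue_integral_def)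
  also have "\<dots> = \<bar>-t\<bar> *\<^sub>R (\<integral>x. indicator {0..} (m + -t * x) * normal_density m t (m + -t * x) \<partial>lborel)"
    by (rule lborel_integral_real_affine) (use t in auto)
  also have "\<dots> = t * (\<integral>x. indicator {..m/t} x * (std_normal_density x / t) \<partial>lborel)"
  proof -
    have "\<And>x. indicator {0..} (m + -t * x) * normal_density m t (m + -t * x) = indicator {..m/t} x * (std_normal_density x / t)"
    proof -
      fix x
      have i: "indicator {0..} (m + -t * x) = (indicator {..m/t} x :: real)"
        using t by (simp add: indicator_def field_simps)
      have n: "normal_density m t (m + -t * x) = std_normal_density x / t"
        using t by (simp add: normal_density_def real_sqrt_mult power_mult_distrib field_simps)
      show "?thesis x" unfolding i n by simp
    qed
    then show ?thesis using t by simp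
  qed
  also have "\<dots> = (\<integral>x. indicator {..m/t} x * std_normal_density x \<partial>lborel)"
    using t by (simp add: mult.assoc)
  also have "\<dots> = Phi (m/t)" by (simp add: Phi_def set_lebesgue_integral_def)
  finally have X: "(LINT y:{0..}|lborel. normal_density m t y) = Phi (m/t)" .
  show ?thesis using X unfolding mt[symmetric] by (simp add: m_def t_def)
qed


lemma Phi_pos: "Phi c > 0"
proof -
  have int: "integrable lborel (\<lambda>x. indicator {..c} x *\<^sub>R std_normal_density x)"
    by (rule integrable_mult_indicator) auto
  have nn: "0 \<le> Phi c" unfolding Phi_def set_lebesgue_integral_def
    by (rule Bochner_Integration.integral_nonneg) (auto simp: indicator_def)
  have "Phi c \<noteq> 0"
  proof
    assume "Phi c = 0"
    then have "AE x in lborel. indicator {..c} x *\<^sub>R std_normal_density x = 0"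
      using integral_nonneg_eq_0_iff_AE[OF int] unfolding Phi_def set_lebesgue_integral_def
      by (auto simp: indicator_def)
    then have "AE x in lborel. x \<notin> {..c}"
      using normal_density_pos[of 1 0] by (rule_tac AE_mp) (auto intro!: AE_I2 simp: indicator_def, metis less_irrefl)
    then have "emeasure lborel {..c} = 0"
      by (subst (asm) AE_iff_measurable[where N="{..c}"]) auto
    moreover have "emeasure lborel {c-1..c} \<le> emeasure lborel {..c}"
      by (rule emeasure_mono) auto
    ultimately show False by simp
  qed
  with nn show ?thesis by simp
qed

lemma decay:
  assumes g: "g > 0" and s: "s > 0"
    and u: "max 0 ((2*a+s\<^sup>2)/(2*g)) \<le> u" and uv: "u \<le> v"
  shows "Wf a g s v \<le> Wf a g s u * exp (-(v-u))"
proof -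
  have "2*a+s\<^sup>2 \<le> 2*g*u" using u g by (simp add: field_simps)
  moreover have "2*g*u \<le> g*(v+u)" using uv g by (simp add: field_simps)
  ultimately have h: "2*a - g*(v+u) + s\<^sup>2 \<le> 0" by linarith
  have "(v-u)*(2*a - g*(v+u) + s\<^sup>2) \<le> 0"
    by (rule mult_nonneg_nonpos) (use uv h in auto)
  then have "((v-u)*(2*a - g*(v+u) + s\<^sup>2)) / s\<^sup>2 \<le> 0"
    by (rule divide_nonpos_pos) (use s in auto)
  moreover have "((v-u)*(2*a - g*(v+u) + s\<^sup>2)) / s\<^sup>2 =
      (2*a* v/s\<^sup>2 - g* v\<^sup>2/s\<^sup>2) - ((2*a*u/s\<^sup>2 - g*u\<^sup>2/s\<^sup>2) + (u-v))"
    using s by (simp add: field_simps power2_eq_square)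
  ultimately have "2*a* v/s\<^sup>2 - g* v\<^sup>2/s\<^sup>2 \<le> (2*a*u/s\<^sup>2 - g*u\<^sup>2/s\<^sup>2) + (u-v)" by linarith
  then have "exp (2*a* v/s\<^sup>2 - g* v\<^sup>2/s\<^sup>2) \<le> exp ((2*a*u/s\<^sup>2 - g*u\<^sup>2/s\<^sup>2) + (u-v))"
    by simp
  then show ?thesis unfolding Wf_def by (simp add: exp_add)
qed

lemma Wf_lower:
  assumes g: "g > 0" and s: "s > 0" and x: "0 \<le> x" "x \<le> x0"
  shows "1 / Wf a g s x \<le> exp ((2*\<bar>a\<bar>*x0 + g*x0\<^sup>2)/s\<^sup>2)"
proof -
  have "x\<^sup>2 \<le> x0\<^sup>2" using x by (intro power_mono) auto
  then have "g*x\<^sup>2 \<le> g*x0\<^sup>2" using g by simp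
  moreover have "-(2*a*x) \<le> 2*\<bar>a\<bar>*x0"
  proof -
    have "-(2*a*x) \<le> 2*\<bar>a\<bar>*x" using x by (simp add: abs_if mult_nonneg_nonneg)
    also have "\<dots> \<le> 2*\<bar>a\<bar>*x0" using x by (intro mult_left_mono) auto
    finally show ?thesis .
  qed
  ultimately have "(g*x\<^sup>2 - 2*a*x)/s\<^sup>2 \<le> (2*\<bar>a\<bar>*x0 + g*x0\<^sup>2)/s\<^sup>2"
    using s by (intro divide_right_mono) (linarith, simp)
  moreover have "1 / Wf a g s x = exp ((g*x\<^sup>2 - 2*a*x)/s\<^sup>2)"
    unfolding Wf_def by (simp add: exp_minus[symmetric] inverse_eq_divide[symmetric] diff_divide_distrib)
  ultimately show ?thesis by simp
qed



theorem lemma4: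
  fixes \<alpha> \<gamma> \<sigma> :: real
  assumes "\<gamma> > 0" and "\<sigma> > 0"
  shows "(\<forall>x>0. (hf \<alpha> \<gamma> \<sigma> has_real_derivative
              (pY \<alpha> \<gamma> \<sigma> 0 / pY \<alpha> \<gamma> \<sigma> x * FbarY \<alpha> \<gamma> \<sigma> x)) (at x))
       \<and> (\<integral>\<^sup>+ x\<in>{0..}. ennreal ((deriv (hf \<alpha> \<gamma> \<sigma>) x)\<^sup>2 * pY \<alpha> \<gamma> \<sigma> x) \<partial>lborel) < \<infinity>"
proof -
  note g = assms(1) and s = assms(2)
  define w where "w = Wf \<alpha> \<gamma> \<sigma>"
  define K where "K = pY \<alpha> \<gamma> \<sigma> 0"
  define N where "N = normal_density (\<alpha>/\<gamma>) (sqrt (\<sigma>\<^sup>2/(2*\<gamma>)))"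
  define P where "P = Phi (\<alpha> / sqrt (\<sigma>\<^sup>2 * \<gamma> / 2))"
  define p where "p = pY \<alpha> \<gamma> \<sigma>"
  have Ppos: "P > 0" unfolding P_def by (rule Phi_pos)
  have wpos: "\<And>y. w y > 0" unfolding w_def by (rule Wf_pos)
  have pN: "\<And>y. p y = N y / P" unfolding p_def N_def P_def by (rule pY_normal[OF g s])
  have pw: "\<And>y. p y = K * w y" unfolding p_def K_def w_def by (rule pY_eq[OF g s])
  have Kpos: "K > 0"
  proof -
    have "N 0 > 0" unfolding N_def by (rule normal_density_pos) (use g s in simp)
    then show ?thesis using pN[of 0] Ppos unfolding K_def p_def by simp
  qed
  have ppos: "\<And>y. p y > 0" using pw Kpos wpos by simp
  have Nint: "set_integrable lborel A N" if "A \<in> sets lborel" for A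
    unfolding set_integrable_def N_def using that g s
    by (intro integrable_mult_indicator integrable_normal_density) auto
  have pfun: "p = (\<lambda>y. (1/P) * N y)" by (rule ext) (simp add: pN)
  have pint: "set_integrable lborel A p" if "A \<in> sets lborel" for A
    unfolding pfun using that by (intro set_integrable_mult_right Nint)
  have tot: "(LINT y:{0..}|lborel. p y) = 1"
  proof -
    have "(LINT y:{0..}|lborel. p y) = (1/P) * (LINT y:{0..}|lborel. N y)"
      unfolding pfun by simp
    also have "(LINT y:{0..}|lborel. N y) = P"
      unfolding N_def P_def by (rule Phi_shift[OF g s])
    finally show ?thesis using Ppos by simp
  qed
  have Fbar_eq: "\<And>x. 0 \<le> x \<Longrightarrow> FbarY \<alpha> \<gamma> \<sigma> x = (LINT y:{x<..}|lborel. p y)"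
  proof -
    fix x :: real assume x: "0 \<le> x"
    have "{0..} = {0..x} \<union> {x<..}" using x by auto
    then have "(LINT y:{0..}|lborel. p y) = (LINT y:{0..x}|lborel. p y) + (LINT y:{x<..}|lborel. p y)"
      by (simp only:) (rule set_integral_Un, auto intro: pint)
    then show "FbarY \<alpha> \<gamma> \<sigma> x = (LINT y:{x<..}|lborel. p y)"
      using tot unfolding FbarY_def FY_def p_def by simp
  qed
  define I where "I = (\<lambda>u::real. LBINT v=0..u. w v)"
  have FY_eq: "\<And>x. 0 \<le> x \<Longrightarrow> FY \<alpha> \<gamma> \<sigma> x = K * I x"
  proof -
    fix x :: real assume x: "0 \<le> x"
    have "FY \<alpha> \<gamma> \<sigma> x = (LINT y:{0..x}|lborel. K * w y)"
      unfolding FY_def p_def[symmetric] pw ..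
    also have "\<dots> = K * (LINT y:{0..x}|lborel. w y)" by simp
    also have "(LINT y:{0..x}|lborel. w y) = I x"
      unfolding I_def using interval_integral_Icc[of 0 x w] x by (simp add: zero_ereal_def)
    finally show "FY \<alpha> \<gamma> \<sigma> x = K * I x" .
  qed
  have e0: "ereal 0 = 0" by (simp add: zero_ereal_def)
  have wcont: "continuous_on A w" for A
    unfolding w_def Wf_def using s by (intro continuous_intros) auto
  have Ider: "\<And>u. (I has_real_derivative w u) (at u)"
  proof -
    fix u :: real
    have "(I has_vector_derivative w u) (at u within {-\<bar>u\<bar>-1..\<bar>u\<bar>+1})"
      using interval_integral_FTC2[of "-\<bar>u\<bar>-1" 0 "\<bar>u\<bar>+1" w u] wcont
      unfolding I_def e0 by auto
    moreover have "at u within {-\<bar>u\<bar>-1..\<bar>u\<bar>+1} = at u" by (rule at_within_Icc_at) auto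
    ultimately show "(I has_real_derivative w u) (at u)"
      by (simp add: has_real_derivative_iff_has_vector_derivative)
  qed
  define f where "f = (\<lambda>u. 1 / w u * (1 - 2 * qL \<alpha> \<gamma> \<sigma> / \<sigma>\<^sup>2 * I u))"
  have hf_eq: "hf \<alpha> \<gamma> \<sigma> = (\<lambda>x. LBINT u=0..x. f u)"
    unfolding hf_def f_def I_def w_def ..
  have fcont: "continuous_on A f" for A
  proof -
    have "\<And>u. isCont f u"
    proof -
      fix u
      have "isCont I u" using Ider by (rule DERIV_isCont)
      moreover have "isCont w u" using wcont[of UNIV] by (simp add: continuous_on_eq_continuous_at)
      ultimately show "isCont f u" unfolding f_def using wpos[of u]
        by (intro continuous_intros) auto
    qed
    then show ?thesis by (simp add: continuous_at_imp_continuous_on)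
  qed
  have hder: "\<And>x. (hf \<alpha> \<gamma> \<sigma> has_real_derivative f x) (at x)"
  proof -
    fix x :: real
    have "((\<lambda>x. LBINT u=0..x. f u) has_vector_derivative f x) (at x within {-\<bar>x\<bar>-1..\<bar>x\<bar>+1})"
      using interval_integral_FTC2[of "-\<bar>x\<bar>-1" 0 "\<bar>x\<bar>+1" f x] fcont
      unfolding e0 by auto
    moreover have "at x within {-\<bar>x\<bar>-1..\<bar>x\<bar>+1} = at x" by (rule at_within_Icc_at) auto
    ultimately show "(hf \<alpha> \<gamma> \<sigma> has_real_derivative f x) (at x)"
      unfolding hf_eq by (simp add: has_real_derivative_iff_has_vector_derivative)
  qed
  have qK: "2 * qL \<alpha> \<gamma> \<sigma> / \<sigma>\<^sup>2 = K" unfolding qL_def K_def using s by simp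
  have feq: "\<And>x. 0 \<le> x \<Longrightarrow> f x = FbarY \<alpha> \<gamma> \<sigma> x / w x"
    unfolding f_def qK FbarY_def using FY_eq by simp
  have part1: "\<forall>x>0. (hf \<alpha> \<gamma> \<sigma> has_real_derivative
              (pY \<alpha> \<gamma> \<sigma> 0 / pY \<alpha> \<gamma> \<sigma> x * FbarY \<alpha> \<gamma> \<sigma> x)) (at x)"
  proof (intro allI impI)
    fix x :: real assume x: "x > 0"
    have "pY \<alpha> \<gamma> \<sigma> 0 / pY \<alpha> \<gamma> \<sigma> x * FbarY \<alpha> \<gamma> \<sigma> x = f x"
      using feq[of x] x Kpos wpos[of x] pw[of x] unfolding p_def K_def[symmetric] by simp
    then show "(hf \<alpha> \<gamma> \<sigma> has_real_derivative
              (pY \<alpha> \<gamma> \<sigma> 0 / pY \<alpha> \<gamma> \<sigma> x * FbarY \<alpha> \<gamma> \<sigma> x)) (at x)"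
      using hder[of x] by simp
  qed
  define x0 where "x0 = max 0 ((2*\<alpha>+\<sigma>\<^sup>2)/(2*\<gamma>))"
  define M where "M = exp ((2*\<bar>\<alpha>\<bar>*x0 + \<gamma>*x0\<^sup>2)/\<sigma>\<^sup>2)"
  define B where "B = K*M*exp x0 + K^3 * w x0 * exp x0"
  have x0: "0 \<le> x0" unfolding x0_def by simp
  have Fnn: "0 \<le> FbarY \<alpha> \<gamma> \<sigma> x" if "0 \<le> x" for x
    unfolding Fbar_eq[OF that] set_lebesgue_integral_def
    using ppos by (intro Bochner_Integration.integral_nonneg) (auto simp: indicator_def less_imp_le)
  have Fle1: "FbarY \<alpha> \<gamma> \<sigma> x \<le> 1" for x
  proof -
    have "0 \<le> FY \<alpha> \<gamma> \<sigma> x"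
      unfolding FY_def p_def[symmetric] set_lebesgue_integral_def
      using ppos by (intro Bochner_Integration.integral_nonneg) (auto simp: indicator_def less_imp_le)
    then show ?thesis unfolding FbarY_def by simp
  qed
  have tail: "FbarY \<alpha> \<gamma> \<sigma> x \<le> p x" if xx: "x0 \<le> x" for x
  proof -
    have xpos: "0 \<le> x" using xx x0 by simp
    have pi: "p integrable_on {x<..}" and eqI: "(LINT y:{x<..}|lborel. p y) = integral {x<..} p"
      using set_borel_integral_eq_integral[OF pint[of "{x<..}"]] by auto
    define c where "c = p x * exp x"
    have ex: "((\<lambda>v. c * exp(-1* v)) has_integral c * (exp(-1*x)/1)) {x..}"
      by (intro has_integral_mult_right has_integral_exp_minus_to_infinity) simp
    have "((\<lambda>v. c * exp(-1* v)) has_integral c * (exp(-1*x)/1)) {x..} \<longleftrightarrow>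
          ((\<lambda>v. c * exp(-1* v)) has_integral c * (exp(-1*x)/1)) {x<..}"
      by (rule has_integral_spike_set_eq) (rule negligible_subset[of "{x}"], auto)+
    with ex have ex2: "((\<lambda>v. c * exp(-1* v)) has_integral c * (exp(-1*x)/1)) {x<..}" by simp
    have "integral {x<..} p \<le> c * (exp(-1*x)/1)"
    proof (rule has_integral_le[OF integrable_integral[OF pi] ex2])
      fix y assume y: "y \<in> {x<..}"
      have "w y \<le> w x * exp (-(y-x))"
        unfolding w_def by (rule decay[OF g s]) (use xx y in \<open>auto simp: x0_def\<close>)
      then have "K * w y \<le> K * (w x * exp (-(y-x)))" using Kpos by simp
      moreover have "exp (-(y-x)) = exp x * exp(-1*y)" by (simp add: exp_add[symmetric])
      ultimately show "p y \<le> c * exp (-1*y)" unfolding c_def pw by (simp add: mult.assoc)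
    qed
    moreover have "c * (exp(-1*x)/1) = p x" unfolding c_def by (simp add: mult.assoc exp_add[symmetric])
    ultimately show ?thesis using Fbar_eq[OF xpos] eqI by simp
  qed
  have bound: "(deriv (hf \<alpha> \<gamma> \<sigma>) x)\<^sup>2 * pY \<alpha> \<gamma> \<sigma> x \<le> B * exp (-1*x)" if xpos: "0 \<le> x" for x
  proof -
    define F where "F = FbarY \<alpha> \<gamma> \<sigma> x"
    have d: "deriv (hf \<alpha> \<gamma> \<sigma>) x = F / w x"
      using DERIV_imp_deriv[OF hder[of x]] feq[OF xpos] unfolding F_def by simp
    have J: "(deriv (hf \<alpha> \<gamma> \<sigma>) x)\<^sup>2 * pY \<alpha> \<gamma> \<sigma> x = K * F\<^sup>2 * (1 / w x)"
      unfolding d p_def[symmetric] pw using wpos[of x] by (simp add: power2_eq_square field_simps)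
    have F0: "0 \<le> F" unfolding F_def by (rule Fnn[OF xpos])
    have F1: "F \<le> 1" unfolding F_def by (rule Fle1)
    have eB1: "K*M*exp x0 * exp(-1*x) \<le> B * exp(-1*x)"
      unfolding B_def using Kpos wpos[of x0] by (simp add: distrib_right)
    show ?thesis
    proof (cases "x \<le> x0")
      case True
      have "F\<^sup>2 \<le> 1" using F0 F1 by (simp add: power_le_one)
      moreover have "1 / w x \<le> M" unfolding M_def w_def by (rule Wf_lower[OF g s xpos True])
      ultimately have "K * F\<^sup>2 * (1 / w x) \<le> K * 1 * M"
        using Kpos wpos[of x] F0 by (intro mult_mono) auto
      also have "\<dots> \<le> K*M*(exp x0 * exp(-1*x))"
      proof -
        have "1 \<le> exp x0 * exp(-1*x)" using True by (simp add: exp_add[symmetric])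
        moreover have "0 \<le> K*M" using Kpos by (simp add: M_def)
        ultimately show ?thesis using mult_left_mono by fastforce
      qed
      also have "\<dots> \<le> B * exp(-1*x)" using eB1 by (simp add: mult.assoc)
      finally show ?thesis unfolding J .
    next
      case False
      have "F \<le> K * w x" using tail[of x] False unfolding F_def pw by simp
      then have "F\<^sup>2 \<le> (K * w x)\<^sup>2" using F0 by (intro power_mono) auto
      then have "K * F\<^sup>2 * (1 / w x) \<le> K * (K * w x)\<^sup>2 * (1 / w x)"
        using Kpos wpos[of x] by (intro mult_right_mono mult_left_mono) auto
      also have "\<dots> = K^3 * w x" using wpos[of x] by (simp add: power2_eq_square power3_eq_cube field_simps)
      also have "\<dots> \<le> K^3 * (w x0 * exp (-(x-x0)))"
      proof -
        have "w x \<le> w x0 * exp (-(x-x0))"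
          unfolding w_def by (rule decay[OF g s]) (use False in \<open>auto simp: x0_def\<close>)
        then show ?thesis using Kpos by simp
      qed
      also have "\<dots> = K^3 * w x0 * exp x0 * exp(-1*x)" by (simp add: exp_add[symmetric])
      also have "\<dots> \<le> B * exp(-1*x)"
        unfolding B_def using Kpos wpos[of x0] by (simp add: distrib_right M_def)
      finally show ?thesis unfolding J .
    qed
  qed
  have Bnn: "0 \<le> B" unfolding B_def M_def using Kpos wpos[of x0] by simp
  have "(\<integral>\<^sup>+ x\<in>{0..}. ennreal ((deriv (hf \<alpha> \<gamma> \<sigma>) x)\<^sup>2 * pY \<alpha> \<gamma> \<sigma> x) \<partial>lborel)
      \<le> (\<integral>\<^sup>+ x\<in>{0..}. ennreal (B * exp (-1*x)) \<partial>lborel)"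
    by (rule nn_integral_mono) (use bound in \<open>auto split: split_indicator intro!: ennreal_leI\<close>)
  also have "\<dots> = ennreal (B * (exp (-1*0)/1))"
    by (rule nn_integral_has_integral_lebesgue')
       (use Bnn has_integral_mult_right[OF has_integral_exp_minus_to_infinity[of 1 0], of B] in auto)
  finally have "(\<integral>\<^sup>+ x\<in>{0..}. ennreal ((deriv (hf \<alpha> \<gamma> \<sigma>) x)\<^sup>2 * pY \<alpha> \<gamma> \<sigma> x) \<partial>lborel) < \<infinity>"
    using le_less_trans by fastforce
  with part1 show ?thesis by blast
qed

end
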